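(* Let $\mathbb{F}\subset\mathbb{K}$ be fields of characteristic zero, $n$ a positive integer, and $A_{n}\colon\mathbb{F}^{n}\to\mathbb{K}$ a symmetric $n$-additive mapping such that $f(x)=A_{n}(x,\ldots,x)$ satisfies $f(x^{2})=2^{n}x^{n}f(x)$ for all $x\in\mathbb{F}$. Then for every $k\in\{0,1,\ldots,n-1\}$, \[ A_{n}(x_{1},\ldots,x_{k},1,\ldots,1)=0\qquad(x_{1},\ldots,x_{k}\in\mathbb{F}), \] where $1$ is repeated $n-k$ times. Moreover, $A_{n}(x^{2},x,\ldots,x)=2x\,A_{n}(x,\ldots,x)$ for all $x\in\mathbb{F}$ (with $x$ repeated $n-1$ times on the left).
   Context: A map $A\colon\mathbb{F}^{n}\to\mathbb{K}$ is $n$-additive if it is additive in each variable separately; symmetric means invariant under permutations of its arguments. *)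

theory Defs
  imports Main "HOL-Library.Multiset"
begin

text \<open>The field F is a subfield of the field K (K of characteristic zero,
  hence so is F). Elements of F^n are represented as lists of length n
  with entries in F.\<close>

definition subfield :: "'k::field set \<Rightarrow> bool" where
  "subfield F \<longleftrightarrow> 0 \<in> F \<and> 1 \<in> F \<and>
     (\<forall>x\<in>F. \<forall>y\<in>F. x + y \<in> F \<and> x - y \<in> F \<and> x * y \<in> F) \<and>
     (\<forall>x\<in>F. x \<noteq> 0 \<longrightarrow> inverse x \<in> F)"

definition n_additive :: "'k::field set \<Rightarrow> nat \<Rightarrow> ('k list \<Rightarrow> 'k) \<Rightarrow> bool" where
  "n_additive F n A \<longleftrightarrow>
     (\<forall>xs y i. length xs = n \<and> set xs \<subseteq> F \<and> y \<in> F \<and> i < n \<longrightarrow>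
        A (xs[i := xs ! i + y]) = A xs + A (xs[i := y]))"

definition symmetric_map :: "'k::field set \<Rightarrow> nat \<Rightarrow> ('k list \<Rightarrow> 'k) \<Rightarrow> bool" where
  "symmetric_map F n A \<longleftrightarrow>
     (\<forall>xs ys. length xs = n \<and> set xs \<subseteq> F \<and> mset ys = mset xs \<longrightarrow> A ys = A xs)"

end

theory Submission
  imports Defs "HOL-Computational_Algebra.Polynomial"
begin

lemma sum2_single:
  assumes "finite I" "\<And>j. finite (J j)" "j0 \<in> I" "i0 \<in> J j0"
    and "\<And>j i. j \<in> I \<Longrightarrow> i \<in> J j \<Longrightarrow> (j, i) \<noteq> (j0, i0) \<Longrightarrow> g j i = 0"
  shows "(\<Sum>j\<in>I. \<Sum>i\<in>J j. g j i) = g j0 i0"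
proof -
  have "(\<Sum>j\<in>I. \<Sum>i\<in>J j. g j i) = (\<Sum>i\<in>J j0. g j0 i) + (\<Sum>j\<in>I - {j0}. \<Sum>i\<in>J j. g j i)"
    using assms(1,3) by (rule sum.remove)
  also have "(\<Sum>j\<in>I - {j0}. \<Sum>i\<in>J j. g j i) = 0"
    using assms(5) by (intro sum.neutral ballI) auto
  also have "(\<Sum>i\<in>J j0. g j0 i) = g j0 i0 + (\<Sum>i\<in>J j0 - {i0}. g j0 i)"
    using assms(2,4) by (rule sum.remove)
  also have "(\<Sum>i\<in>J j0 - {i0}. g j0 i) = 0"
    using assms(3,5) by (intro sum.neutral ballI) auto
  finally show ?thesis by simp
qed

lemma pascal_sum:
  fixes f :: "nat \<Rightarrow> 'a::comm_semiring_1"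
  shows "(\<Sum>j\<le>Suc m. of_nat (Suc m choose j) * f j)
       = (\<Sum>j\<le>m. of_nat (m choose j) * f j) + (\<Sum>j\<le>m. of_nat (m choose j) * f (Suc j))"
proof -
  have a: "(\<Sum>j\<le>Suc m. of_nat (Suc m choose j) * f j)
      = f 0 + (\<Sum>j\<le>m. of_nat (m choose j) * f (Suc j)) + (\<Sum>j\<le>m. of_nat (m choose Suc j) * f (Suc j))"
    by (subst sum.atMost_Suc_shift) (simp add: sum.distrib algebra_simps del: sum.atMost_Suc)
  have b: "(\<Sum>j\<le>m. of_nat (m choose j) * f j) = (\<Sum>j\<le>Suc m. of_nat (m choose j) * f j)"
    by (simp add: binomial_eq_0)
  also have "\<dots> = f 0 + (\<Sum>j\<le>m. of_nat (m choose Suc j) * f (Suc j))"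
    by (subst sum.atMost_Suc_shift) (simp del: sum.atMost_Suc)
  finally show ?thesis using a by (simp add: algebra_simps)
qed

lemma poly_nat_zero:
  fixes p :: "'k::field_char_0 poly"
  assumes "\<And>N. poly p (of_nat N) = 0"
  shows "p = 0"
proof (rule ccontr)
  assume "p \<noteq> 0"
  then have "finite {x. poly p x = 0}" by (rule poly_roots_finite)
  moreover have "range (of_nat :: nat \<Rightarrow> 'k) \<subseteq> {x. poly p x = 0}" using assms by auto
  ultimately have "finite (range (of_nat :: nat \<Rightarrow> 'k))" by (rule finite_subset[rotated])
  then have "finite (UNIV :: nat set)" using finite_imageD inj_of_nat by blast
  then show False by simp
qed


locale SA =
  fixes F :: "'k::field_char_0 set" and n :: nat and A :: "'k list \<Rightarrow> 'k"
  assumes sf: "subfield F" and nadd: "n_additive F n A" and nsym: "symmetric_map F n A"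
begin

lemma F0: "0 \<in> F" and F1: "1 \<in> F"
  using sf unfolding subfield_def by auto

lemma Fadd: "x \<in> F \<Longrightarrow> y \<in> F \<Longrightarrow> x + y \<in> F"
  and Fmult: "x \<in> F \<Longrightarrow> y \<in> F \<Longrightarrow> x * y \<in> F"
  using sf unfolding subfield_def by auto

lemma Fnat: "of_nat N \<in> F"
  by (induction N) (auto simp: F0 F1 Fadd add.commute)

lemma Fpow: "x \<in> F \<Longrightarrow> x ^ k \<in> F"
  by (induction k) (auto simp: F1 Fmult)

lemma symm:
  assumes "length xs = n" "set xs \<subseteq> F" "mset ys = mset xs"
  shows "A ys = A xs"
  using nsym assms unfolding symmetric_map_def by blast

lemma addpos:
  assumes "length pre + Suc (length R) = n" "set pre \<subseteq> F" "set R \<subseteq> F" "u \<in> F" "y \<in> F"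
  shows "A (pre @ (u + y) # R) = A (pre @ u # R) + A (pre @ y # R)"
proof -
  let ?xs = "pre @ u # R"
  have "A (?xs[length pre := ?xs ! length pre + y]) = A ?xs + A (?xs[length pre := y])"
  proof -
    have "\<forall>xs y i. length xs = n \<and> set xs \<subseteq> F \<and> y \<in> F \<and> i < n \<longrightarrow>
        A (xs[i := xs ! i + y]) = A xs + A (xs[i := y])" using nadd unfolding n_additive_def .
    then have "length ?xs = n \<and> set ?xs \<subseteq> F \<and> y \<in> F \<and> length pre < n \<longrightarrow>
        A (?xs[length pre := ?xs ! length pre + y]) = A ?xs + A (?xs[length pre := y])" by blast
    then show ?thesis using assms by auto
  qed
  then show ?thesis by (simp add: list_update_append)
qed

lemma zeropos:
  assumes "length pre + Suc (length R) = n" "set pre \<subseteq> F" "set R \<subseteq> F"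
  shows "A (pre @ 0 # R) = 0"
  using addpos[OF assms F0 F0] by simp

lemma hompos:
  assumes "length pre + Suc (length R) = n" "set pre \<subseteq> F" "set R \<subseteq> F" "v \<in> F"
  shows "A (pre @ (of_nat N * v) # R) = of_nat N * A (pre @ v # R)"
proof (induction N)
  case 0
  then show ?case using zeropos[OF assms(1-3)] by simp
next
  case (Suc N)
  have "A (pre @ (of_nat (Suc N) * v) # R) = A (pre @ (v + of_nat N * v) # R)"
    by (simp add: algebra_simps)
  also have "\<dots> = A (pre @ v # R) + A (pre @ (of_nat N * v) # R)"
    using assms by (intro addpos) (auto intro: Fmult Fnat)
  finally show ?case using Suc by (simp add: algebra_simps)
qed

lemma linpos:
  assumes "length pre + Suc (length R) = n" "set pre \<subseteq> F" "set R \<subseteq> F" "u \<in> F" "v \<in> F"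
  shows "A (pre @ (u + of_nat N * v) # R) = A (pre @ u # R) + of_nat N * A (pre @ v # R)"
  using addpos[OF assms(1-4), of "of_nat N * v"] hompos[OF assms(1-3,5)] assms
  by (auto intro: Fmult Fnat)

lemma expand:
  assumes "length pre + m = n" "set pre \<subseteq> F" "u \<in> F" "v \<in> F"
  shows "A (pre @ replicate m (u + of_nat N * v))
     = (\<Sum>j\<le>m. of_nat (m choose j) * of_nat N ^ j * A (pre @ replicate (m - j) u @ replicate j v))"
  using assms(1,2)
proof (induction m arbitrary: pre)
  case 0
  then show ?case by simp
next
  case (Suc m)
  let ?w = "u + of_nat N * v"
  let ?T = "\<lambda>j. A (pre @ replicate (Suc m - j) u @ replicate j v)"
  have wF: "?w \<in> F" using assms by (auto intro: Fadd Fmult Fnat)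
  have "A (pre @ replicate (Suc m) ?w) = A ((pre @ [?w]) @ replicate m ?w)" by simp
  also have "\<dots> = (\<Sum>j\<le>m. of_nat (m choose j) * of_nat N ^ j * A ((pre @ [?w]) @ replicate (m - j) u @ replicate j v))"
    using Suc wF by (intro Suc.IH) auto
  also have "\<dots> = (\<Sum>j\<le>m. of_nat (m choose j) * (of_nat N ^ j * ?T j)
                  + of_nat (m choose j) * (of_nat N ^ Suc j * ?T (Suc j)))"
  proof (rule sum.cong[OF refl])
    fix j assume j: "j \<in> {..m}"
    let ?R = "replicate (m - j) u @ replicate j v"
    have "A (pre @ ?w # ?R) = A (pre @ u # ?R) + of_nat N * A (pre @ v # ?R)"
      using Suc.prems j assms by (intro linpos) auto
    moreover have "A (pre @ u # ?R) = ?T j"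
      using j by (subst Suc_diff_le) auto
    moreover have "A (pre @ v # ?R) = ?T (Suc j)"
      using Suc.prems j assms by (intro symm) auto
    ultimately show "of_nat (m choose j) * of_nat N ^ j * A ((pre @ [?w]) @ ?R)
        = of_nat (m choose j) * (of_nat N ^ j * ?T j) + of_nat (m choose j) * (of_nat N ^ Suc j * ?T (Suc j))"
      by (simp add: algebra_simps)
  qed
  also have "\<dots> = (\<Sum>j\<le>Suc m. of_nat (Suc m choose j) * (of_nat N ^ j * ?T j))"
    by (subst pascal_sum) (simp add: sum.distrib)
  finally show ?case by (simp add: algebra_simps)
qed


lemma polar:
  assumes "length pre + m = n" "set pre \<subseteq> F" "\<forall>x\<in>F. A (pre @ replicate m x) = 0"
    "length ys = m" "set ys \<subseteq> F"
  shows "A (pre @ ys) = 0"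
  using assms
proof (induction m arbitrary: pre ys)
  case 0
  then show ?case using F0 by auto
next
  case (Suc m)
  obtain y ys' where ys: "ys = y # ys'" using Suc.prems(4) by (cases ys) auto
  have yF: "y \<in> F" using Suc.prems ys by auto
  have key: "\<forall>x\<in>F. A ((pre @ [y]) @ replicate m x) = 0"
  proof
    fix x assume xF: "x \<in> F"
    define c where "c j = of_nat (Suc m choose j) * A (pre @ replicate (Suc m - j) x @ replicate j y)" for j
    define p where "p = (\<Sum>j\<le>Suc m. monom (c j) j)"
    have "poly p (of_nat N) = 0" for N
    proof -
      have "poly p (of_nat N) = (\<Sum>j\<le>Suc m. c j * of_nat N ^ j)"
        unfolding p_def by (simp add: poly_sum poly_monom)
      also have "\<dots> = A (pre @ replicate (Suc m) (x + of_nat N * y))"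
        unfolding c_def using Suc.prems xF yF
        by (subst expand) (auto simp: algebra_simps)
      also have "\<dots> = 0" using Suc.prems(3) xF yF Fadd Fmult Fnat by blast
      finally show ?thesis .
    qed
    then have "p = 0" by (rule poly_nat_zero)
    then have "coeff p 1 = 0" by simp
    then have "c 1 = 0" unfolding p_def by (simp add: coeff_sum del: sum.atMost_Suc)
    then have "A (pre @ replicate m x @ [y]) = 0"
      unfolding c_def by (simp del: of_nat_Suc)
    moreover have "A ((pre @ [y]) @ replicate m x) = A (pre @ replicate m x @ [y])"
      using Suc.prems xF yF by (intro symm) auto
    ultimately show "A ((pre @ [y]) @ replicate m x) = 0" by simp
  qed
  have "A ((pre @ [y]) @ ys') = 0"
    using Suc.prems key yF ys by (intro Suc.IH) auto
  then show ?case using ys by simp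
qed


lemma polyeq:
  assumes fe: "\<forall>x\<in>F. A (replicate n (x ^ 2)) = 2 ^ n * x ^ n * A (replicate n x)" and xF: "x \<in> F"
  shows "(\<Sum>j\<le>n. \<Sum>i\<le>n-j. monom (of_nat (n choose j) * of_nat (n-j choose i) * 2^i
             * A (replicate j 1 @ replicate (n-j-i) (x^2) @ replicate i x)) (2*j+i))
       = (\<Sum>j\<le>n. \<Sum>i\<le>n. monom (2^n * of_nat (n choose j) * x^(n-j) * of_nat (n choose i)
             * A (replicate (n-i) x @ replicate i 1)) (j+i))"
  (is "?P = ?Q")
proof -
  have x2F: "x^2 \<in> F" using xF by (rule Fpow)
  have "poly ?P (of_nat N) = poly ?Q (of_nat N)" for N
  proof -
    let ?N = "of_nat N :: 'k"
    let ?a = "x^2 + of_nat (2*N) * x"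
    have aF: "?a \<in> F" using xF x2F by (intro Fadd Fmult Fnat)
    have sq: "(x + ?N)^2 = ?a + of_nat (N^2) * 1"
      by (simp add: power2_eq_square algebra_simps)
    have "A (replicate n ((x + ?N)^2)) = A ([] @ replicate n (?a + of_nat (N^2) * 1))"
      by (simp add: sq)
    also have "\<dots> = (\<Sum>j\<le>n. of_nat (n choose j) * of_nat (N^2) ^ j * A ([] @ replicate (n - j) ?a @ replicate j 1))"
      using aF F1 by (intro expand) auto
    also have "\<dots> = (\<Sum>j\<le>n. of_nat (n choose j) * of_nat (N^2) ^ j * A (replicate j 1 @ replicate (n - j) (?a)))"
    proof (rule sum.cong[OF refl])
      fix j assume j: "j \<in> {..n}"
      have "A ([] @ replicate (n - j) ?a @ replicate j 1) = A (replicate j 1 @ replicate (n - j) ?a)"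
        using j aF F1 by (intro symm) auto
      then show "of_nat (n choose j) * of_nat (N^2) ^ j * A ([] @ replicate (n - j) ?a @ replicate j 1)
          = of_nat (n choose j) * of_nat (N^2) ^ j * A (replicate j 1 @ replicate (n - j) ?a)" by simp
    qed
    also have "\<dots> = (\<Sum>j\<le>n. of_nat (n choose j) * of_nat (N^2) ^ j * (\<Sum>i\<le>n-j. of_nat (n-j choose i) * of_nat (2*N) ^ i
             * A (replicate j 1 @ replicate (n-j-i) (x^2) @ replicate i x)))"
    proof (rule sum.cong[OF refl])
      fix j assume j: "j \<in> {..n}"
      have "A (replicate j 1 @ replicate (n - j) (x^2 + of_nat (2*N) * x)) = (\<Sum>i\<le>n-j. of_nat (n-j choose i) * of_nat (2*N) ^ i
             * A (replicate j 1 @ replicate (n-j-i) (x^2) @ replicate i x))"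
        using j F1 x2F xF by (intro expand) auto
      then show "of_nat (n choose j) * of_nat (N^2) ^ j * A (replicate j 1 @ replicate (n - j) ?a)
        = of_nat (n choose j) * of_nat (N^2) ^ j * (\<Sum>i\<le>n-j. of_nat (n-j choose i) * of_nat (2*N) ^ i
             * A (replicate j 1 @ replicate (n-j-i) (x^2) @ replicate i x))" by simp
    qed
    also have "\<dots> = poly ?P ?N"
    proof -
      have e: "of_nat (N^2) ^ j * of_nat (2*N) ^ i = (2::'k)^i * ?N ^ (2*j+i)" for i j
        by (simp add: power_add power_mult_distrib power_mult)
      show ?thesis
        unfolding poly_sum poly_monom sum_distrib_left
        by (intro sum.cong refl) (simp add: e[symmetric] algebra_simps power_add power_mult[symmetric])
    qed
    finally have L: "A (replicate n ((x + ?N)^2)) = poly ?P ?N" .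
    have "A (replicate n (x + ?N)) = A ([] @ replicate n (x + of_nat N * 1))" by simp
    also have "\<dots> = (\<Sum>i\<le>n. of_nat (n choose i) * ?N ^ i * A ([] @ replicate (n - i) x @ replicate i 1))"
      using xF F1 by (intro expand) auto
    finally have G: "A (replicate n (x + ?N)) = (\<Sum>i\<le>n. of_nat (n choose i) * ?N ^ i * A (replicate (n - i) x @ replicate i 1))"
      by simp
    have B: "(x + ?N)^n = (\<Sum>j\<le>n. of_nat (n choose j) * ?N ^ j * x ^ (n - j))"
      using binomial_ring[of ?N x n] by (simp add: add.commute)
    have "2^n * (x + ?N)^n * A (replicate n (x + ?N)) = poly ?Q ?N"
      unfolding G B
      by (simp add: poly_sum poly_monom sum_distrib_left sum_distrib_right power_add algebra_simps)
    moreover have "A (replicate n ((x + ?N)^2)) = 2^n * (x + ?N)^n * A (replicate n (x + ?N))"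
      using fe xF Fadd Fnat by blast
    ultimately show ?thesis using L by simp
  qed
  then have "?P - ?Q = 0" by (intro poly_nat_zero) simp
  then show ?thesis by simp
qed


lemma step:
  assumes fe: "\<forall>x\<in>F. A (replicate n (x ^ 2)) = 2 ^ n * x ^ n * A (replicate n x)"
    and kn: "k < n"
    and H: "\<forall>m<k. \<forall>ys. length ys = m \<and> set ys \<subseteq> F \<longrightarrow> A (ys @ replicate (n - m) 1) = 0"
    and xF: "x \<in> F"
  shows "A (replicate k x @ replicate (n - k) 1) = 0"
proof -
  have x2F: "x^2 \<in> F" using xF by (rule Fpow)
  define T where "T j i = A (replicate j 1 @ replicate (n-j-i) (x^2) @ replicate i x)" for j i
  define G where "G i = A (replicate (n-i) x @ replicate i 1)" for i
  define cp where "cp j i = of_nat (n choose j) * of_nat (n-j choose i) * 2^i * T j i" for j i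
  define cq where "cq j i = 2^n * of_nat (n choose j) * x^(n-j) * of_nat (n choose i) * G i" for j i
  have eq: "(\<Sum>j\<le>n. \<Sum>i\<le>n-j. monom (cp j i) (2*j+i)) = (\<Sum>j\<le>n. \<Sum>i\<le>n. monom (cq j i) (j+i))"
    using polyeq[OF fe xF] unfolding cp_def cq_def T_def G_def .
  then have "coeff (\<Sum>j\<le>n. \<Sum>i\<le>n-j. monom (cp j i) (2*j+i)) (2*n-k)
      = coeff (\<Sum>j\<le>n. \<Sum>i\<le>n. monom (cq j i) (j+i)) (2*n-k)" by simp
  then have E: "(\<Sum>j\<le>n. \<Sum>i\<le>n-j. if 2*j+i = 2*n-k then cp j i else 0)
      = (\<Sum>j\<le>n. \<Sum>i\<le>n. if j+i = 2*n-k then cq j i else 0)"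
    unfolding coeff_sum coeff_monom .
  have T0: "T j i = 0" if "j \<le> n" "i \<le> n-j" "n-k < j" for j i
  proof -
    have "T j i = A ((replicate (n-j-i) (x^2) @ replicate i x) @ replicate (n - (n-j)) 1)"
      unfolding T_def using that x2F xF F1 by (intro symm) auto
    also have "\<dots> = 0" using H that x2F xF
      by (intro H[rule_format]) auto
    finally show ?thesis .
  qed
  have G0: "G i = 0" if "i \<le> n" "n-k < i" for i
  proof -
    have "G i = A (replicate (n-i) x @ replicate (n - (n-i)) 1)" unfolding G_def using that by simp
    also have "\<dots> = 0" using that xF by (intro H[rule_format]) auto
    finally show ?thesis .
  qed
  have LP: "(\<Sum>j\<le>n. \<Sum>i\<le>n-j. if 2*j+i = 2*n-k then cp j i else 0) = (if 2*(n-k)+k = 2*n-k then cp (n-k) k else 0)"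
  proof (rule sum2_single)
    fix j i assume ji: "j \<in> {..n}" "i \<in> {..n-j}" "(j, i) \<noteq> (n-k, k)"
    show "(if 2*j+i = 2*n-k then cp j i else 0) = 0"
    proof (cases "n-k < j")
      case True then show ?thesis using ji T0 unfolding cp_def by auto
    next
      case False then show ?thesis using ji kn by auto
    qed
  qed (use kn in auto)
  have RQ: "(\<Sum>j\<le>n. \<Sum>i\<le>n. if j+i = 2*n-k then cq j i else 0) = (if n+(n-k) = 2*n-k then cq n (n-k) else 0)"
  proof (rule sum2_single)
    fix j i assume ji: "j \<in> {..n}" "i \<in> {..n}" "(j, i) \<noteq> (n, n-k)"
    show "(if j+i = 2*n-k then cq j i else 0) = 0"
    proof (cases "n-k < i")
      case True then show ?thesis using ji G0 unfolding cq_def by auto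
    next
      case False then show ?thesis using ji kn by auto
    qed
  qed (use kn in auto)
  have TG: "T (n-k) k = G (n-k)"
    unfolding T_def G_def using kn xF F1 by (intro symm) auto
  have "of_nat (n choose (n-k)) * 2^k * G (n-k) = 2^n * of_nat (n choose (n-k)) * G (n-k)"
  proof -
    have c1: "2*(n-k)+k = 2*n-k" and c2: "n+(n-k) = 2*n-k" and c3: "n-(n-k) = k" using kn by auto
    have "cp (n-k) k = cq n (n-k)" using E LP RQ c1 c2 by simp
    then show ?thesis unfolding cp_def cq_def using TG c3 by (simp add: algebra_simps)
  qed
  then have "(of_nat (n choose (n-k)) * ((2::'k)^n - 2^k)) * G (n-k) = 0"
    by (simp add: algebra_simps) (metis)
  moreover have "of_nat (n choose (n-k)) \<noteq> (0::'k)" using kn by simp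
  moreover have "(2::'k)^n \<noteq> 2^k"
  proof
    assume "(2::'k)^n = 2^k"
    then have "of_nat (2^n) = (of_nat (2^k) :: 'k)" by simp
    then have "(2::nat)^n = 2^k" by (rule of_nat_eq_iff[THEN iffD1])
    then show False using kn by simp
  qed
  ultimately have "G (n-k) = 0" by simp
  then show ?thesis unfolding G_def using kn by simp
qed


lemma final:
  assumes fe: "\<forall>x\<in>F. A (replicate n (x ^ 2)) = 2 ^ n * x ^ n * A (replicate n x)"
    and n1: "1 \<le> n"
    and H: "\<forall>m<n. \<forall>ys. length ys = m \<and> set ys \<subseteq> F \<longrightarrow> A (ys @ replicate (n - m) 1) = 0"
    and xF: "x \<in> F"
  shows "A (x ^ 2 # replicate (n - 1) x) = 2 * x * A (replicate n x)"
proof -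
  have x2F: "x^2 \<in> F" using xF by (rule Fpow)
  define T where "T j i = A (replicate j 1 @ replicate (n-j-i) (x^2) @ replicate i x)" for j i
  define G where "G i = A (replicate (n-i) x @ replicate i 1)" for i
  define cp where "cp j i = of_nat (n choose j) * of_nat (n-j choose i) * 2^i * T j i" for j i
  define cq where "cq j i = 2^n * of_nat (n choose j) * x^(n-j) * of_nat (n choose i) * G i" for j i
  have eq: "(\<Sum>j\<le>n. \<Sum>i\<le>n-j. monom (cp j i) (2*j+i)) = (\<Sum>j\<le>n. \<Sum>i\<le>n. monom (cq j i) (j+i))"
    using polyeq[OF fe xF] unfolding cp_def cq_def T_def G_def .
  then have "coeff (\<Sum>j\<le>n. \<Sum>i\<le>n-j. monom (cp j i) (2*j+i)) (n-1)
      = coeff (\<Sum>j\<le>n. \<Sum>i\<le>n. monom (cq j i) (j+i)) (n-1)" by simp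
  then have E: "(\<Sum>j\<le>n. \<Sum>i\<le>n-j. if 2*j+i = n-1 then cp j i else 0)
      = (\<Sum>j\<le>n. \<Sum>i\<le>n. if j+i = n-1 then cq j i else 0)"
    unfolding coeff_sum coeff_monom .
  have T0: "T j i = 0" if "j \<le> n" "i \<le> n-j" "0 < j" for j i
  proof -
    have "T j i = A ((replicate (n-j-i) (x^2) @ replicate i x) @ replicate (n - (n-j)) 1)"
      unfolding T_def using that x2F xF F1 by (intro symm) auto
    also have "\<dots> = 0" using H that x2F xF
      by (intro H[rule_format]) auto
    finally show ?thesis .
  qed
  have G0: "G i = 0" if "i \<le> n" "0 < i" for i
  proof -
    have "G i = A (replicate (n-i) x @ replicate (n - (n-i)) 1)" unfolding G_def using that by simp
    also have "\<dots> = 0" using that xF by (intro H[rule_format]) auto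
    finally show ?thesis .
  qed
  have LP: "(\<Sum>j\<le>n. \<Sum>i\<le>n-j. if 2*j+i = n-1 then cp j i else 0) = (if 2*0+(n-1) = n-1 then cp 0 (n-1) else 0)"
  proof (rule sum2_single)
    fix j i assume ji: "j \<in> {..n}" "i \<in> {..n-j}" "(j, i) \<noteq> (0, n-1)"
    show "(if 2*j+i = n-1 then cp j i else 0) = 0"
    proof (cases "0 < j")
      case True then show ?thesis using ji T0 unfolding cp_def by auto
    next
      case False then show ?thesis using ji by auto
    qed
  qed auto
  have RQ: "(\<Sum>j\<le>n. \<Sum>i\<le>n. if j+i = n-1 then cq j i else 0) = (if (n-1)+0 = n-1 then cq (n-1) 0 else 0)"
  proof (rule sum2_single)
    fix j i assume ji: "j \<in> {..n}" "i \<in> {..n}" "(j, i) \<noteq> (n-1, 0)"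
    show "(if j+i = n-1 then cq j i else 0) = 0"
    proof (cases "0 < i")
      case True then show ?thesis using ji G0 unfolding cq_def by auto
    next
      case False then show ?thesis using ji by auto
    qed
  qed auto
  have c3: "n - (n-1) = 1" using n1 by simp
  have "cp 0 (n-1) = cq (n-1) 0" using E LP RQ by simp
  moreover have ch: "n choose (n-1) = n"
    using binomial_symmetric[OF n1] by simp
  moreover have "T 0 (n-1) = A (x ^ 2 # replicate (n - 1) x)" unfolding T_def using c3 by simp
  moreover have "G 0 = A (replicate n x)" unfolding G_def by simp
  moreover have "(2::'k)^n = 2 * 2^(n-1)" using n1 by (cases n) auto
  ultimately have "of_nat n * 2^(n-1) * A (x ^ 2 # replicate (n - 1) x) = of_nat n * 2^(n-1) * (2 * x * A (replicate n x))"
    unfolding cp_def cq_def using c3 n1 by (simp add: ac_simps) (metis diff_le_self not_le)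
  moreover have "of_nat n * 2^(n-1) \<noteq> (0::'k)" using n1 by simp
  ultimately show ?thesis by simp
qed

lemma allH:
  assumes fe: "\<forall>x\<in>F. A (replicate n (x ^ 2)) = 2 ^ n * x ^ n * A (replicate n x)"
  shows "k \<le> n \<Longrightarrow> \<forall>m<k. \<forall>ys. length ys = m \<and> set ys \<subseteq> F \<longrightarrow> A (ys @ replicate (n - m) 1) = 0"
proof (induction k)
  case 0
  then show ?case by simp
next
  case (Suc k)
  then have kn: "k < n" and H: "\<forall>m<k. \<forall>ys. length ys = m \<and> set ys \<subseteq> F \<longrightarrow> A (ys @ replicate (n - m) 1) = 0"
    by auto
  have Z: "\<forall>x\<in>F. A (replicate (n-k) 1 @ replicate k x) = 0"
  proof
    fix x assume xF: "x \<in> F"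
    have "A (replicate (n-k) 1 @ replicate k x) = A (replicate k x @ replicate (n - k) 1)"
      using kn xF F1 by (intro symm) auto
    also have "\<dots> = 0" using step[OF fe kn H xF] .
    finally show "A (replicate (n-k) 1 @ replicate k x) = 0" .
  qed
  have "A (ys @ replicate (n - k) 1) = 0" if "length ys = k" "set ys \<subseteq> F" for ys
  proof -
    have "A (ys @ replicate (n - k) 1) = A (replicate (n-k) 1 @ ys)"
      using that kn F1 by (intro symm) auto
    also have "\<dots> = 0" using Z that kn F1 by (intro polar) auto
    finally show ?thesis .
  qed
  then show ?case using H less_Suc_eq by auto
qed

end

theorem mainTheorem2:
  fixes F :: "'k::field_char_0 set" and n :: nat and A :: "'k list \<Rightarrow> 'k"
  assumes "subfield F"
    and "n \<ge> 1"
    and "n_additive F n A"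
    and "symmetric_map F n A"
    and "\<forall>x\<in>F. A (replicate n (x ^ 2)) = 2 ^ n * x ^ n * A (replicate n x)"
  shows "(\<forall>k<n. \<forall>xs. length xs = k \<and> set xs \<subseteq> F \<longrightarrow>
            A (xs @ replicate (n - k) 1) = 0)
       \<and> (\<forall>x\<in>F. A (x ^ 2 # replicate (n - 1) x) = 2 * x * A (replicate n x))"
proof -
  interpret SA F n A using assms(1,3,4) by unfold_locales
  have H: "\<forall>m<n. \<forall>ys. length ys = m \<and> set ys \<subseteq> F \<longrightarrow> A (ys @ replicate (n - m) 1) = 0"
    using allH[OF assms(5) order_refl] .
  show ?thesis using H final[OF assms(5) assms(2) H] by blast
qed

end
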